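(* Let $Q\in GL(n,\mathbb{C})$ be a matrix such that $Q\bar Q\in\mathbb{R}I_n$. Then the condition $\operatorname{Tr}(QQ^* )=\operatorname{Tr}((QQ^* )^{-1})$ is equivalent to: $Q\bar Q=\pm I_n$ if $n$ is even, and $Q\bar Q=I_n$ if $n$ is odd.
   Context: $\bar Q$ denotes the entrywise complex conjugate of $Q$ and $Q^*$ its conjugate transpose. *)

theory Defs
  imports "HOL-Analysis.Analysis"
begin

definition mat_conj :: "complex^'n^'m \<Rightarrow> complex^'n^'m" where
  "mat_conj A = (\<chi> i j. cnj (A $ i $ j))"

definition mat_adj :: "complex^'n^'m \<Rightarrow> complex^'m^'n" where
  "mat_adj A = transpose (mat_conj A)"

end

theory Submission
  imports Defs
begin

lemma det_mat_conj: "det (mat_conj (A::complex^'n^'n)) = cnj (det A)"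
  unfolding det_def mat_conj_def by (simp add: cnj_sum cnj_prod)

lemma det_mat_scalar: "det (mat a :: 'a::comm_ring_1^'n^'n) = a ^ CARD('n)"
  by (simp add: det_diagonal mat_def)

lemma mat_inj: "(mat a :: 'a::zero^'n^'n) = mat b \<longleftrightarrow> a = b"
proof
  assume h: "(mat a :: 'a^'n^'n) = mat b"
  fix i :: 'n
  have "(mat a :: 'a^'n^'n) $ i $ i = a" "(mat b :: 'a^'n^'n) $ i $ i = b" unfolding mat_def by simp_all
  then show "a = b" using h by metis
qed simp
lemma mat_entry: "((mat c::'a::comm_semiring_1^'n^'n) ** A) $ i $ j = c * A $ i $ j"
  unfolding matrix_matrix_mult_def mat_def
  by (simp add: if_distrib if_distribR cong: if_cong)
lemma mat_mult_mat: "(mat a::'a::comm_semiring_1^'n^'n) ** mat b = mat (a*b)"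
  by (simp add: vec_eq_iff mat_entry) (simp add: mat_def)

lemma mat_comm: "(A::'a::comm_semiring_1^'n^'n) ** mat c = mat c ** A"
  unfolding matrix_matrix_mult_def mat_def
  by (simp add: vec_eq_iff if_distrib if_distribR mult.commute cong: if_cong)

lemma mat_scal_right: "(A::'a::comm_semiring_1^'n^'n) ** (mat c ** B) = mat c ** (A ** B)"
  by (metis matrix_mul_assoc mat_comm)

lemma trace_mat_mult: "trace ((mat c::'a::comm_semiring_1^'n^'n) ** A) = c * trace A"
  unfolding trace_def matrix_matrix_mult_def mat_def
  by (simp add: if_distrib if_distribR sum_distrib_left cong: if_cong)

lemma transpose_mat': "transpose (mat c :: 'a::zero^'n^'n) = mat c"
  by (simp add: vec_eq_iff transpose_def mat_def)

lemma matrix_inv_unique: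
  fixes A B :: "'a::field^'n^'n"
  assumes "A ** B = mat 1"
  shows "matrix_inv A = B"
proof -
  have BA: "B ** A = mat 1" using assms matrix_left_right_inverse by blast
  have ex: "\<exists>C. A ** C = mat 1 \<and> C ** A = mat 1" using assms BA by blast
  have C: "A ** matrix_inv A = mat 1 \<and> matrix_inv A ** A = mat 1"
    unfolding matrix_inv_def by (rule someI_ex[OF ex])
  have "matrix_inv A = matrix_inv A ** (A ** B)" using assms by simp
  also have "\<dots> = B" using C by (simp add: matrix_mul_assoc)
  finally show ?thesis .
qed

lemma trace_eq:
  fixes Q :: "complex^'n^'n"
  shows "trace (transpose Q ** mat_conj Q) = trace (Q ** mat_adj Q)"
  unfolding trace_def matrix_matrix_mult_def mat_adj_def mat_conj_def transpose_def
  apply (simp only: vec_lambda_beta)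
  apply (subst sum.swap)
  apply (simp add: mult.commute)
  done

lemma trace_pos:
  fixes Q :: "complex^'n^'n"
  assumes "Q \<noteq> 0"
  shows "trace (Q ** mat_adj Q) \<noteq> 0"
proof -
  have "trace (Q ** mat_adj Q) = (\<Sum>i\<in>UNIV. \<Sum>k\<in>UNIV. of_real ((cmod (Q$i$k))\<^sup>2))"
    unfolding trace_def matrix_matrix_mult_def mat_adj_def mat_conj_def transpose_def
    by (simp add: complex_norm_square del: of_real_power)
  also have "\<dots> = of_real (\<Sum>i\<in>UNIV. \<Sum>k\<in>UNIV. (cmod (Q$i$k))\<^sup>2)" by simp
  finally have e: "trace (Q ** mat_adj Q) = of_real (\<Sum>i\<in>UNIV. \<Sum>k\<in>UNIV. (cmod (Q$i$k))\<^sup>2)" .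
  obtain i k where ik: "Q$i$k \<noteq> 0" using assms by (metis vec_eq_iff zero_index)
  have "(cmod (Q$i$k))\<^sup>2 \<le> (\<Sum>k\<in>UNIV. (cmod (Q$i$k))\<^sup>2)"
    by (rule member_le_sum) auto
  also have "\<dots> \<le> (\<Sum>i\<in>UNIV. \<Sum>k\<in>UNIV. (cmod (Q$i$k))\<^sup>2)"
    by (rule member_le_sum) (auto intro: sum_nonneg)
  finally have "0 < (\<Sum>i\<in>UNIV. \<Sum>k\<in>UNIV. (cmod (Q$i$k))\<^sup>2)"
    using ik by (smt (verit) zero_less_power2 norm_eq_zero)
  then show ?thesis unfolding e by (metis less_irrefl of_real_eq_0_iff)
qed

theorem proposition1:
  fixes Q :: "complex^'n^'n"
  assumes "invertible Q"
    and "\<exists>r::real. Q ** mat_conj Q = mat (complex_of_real r)"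
  shows "trace (Q ** mat_adj Q) = trace (matrix_inv (Q ** mat_adj Q)) \<longleftrightarrow>
    (if even CARD('n) then Q ** mat_conj Q = mat 1 \<or> Q ** mat_conj Q = mat (-1)
     else Q ** mat_conj Q = mat 1)"
proof -
  obtain r :: real where r: "Q ** mat_conj Q = mat (complex_of_real r)" using assms(2) by blast
  have dQ: "det Q \<noteq> 0" using assms(1) invertible_det_nz by blast
  have "det Q * cnj (det Q) = (complex_of_real r) ^ CARD('n)"
    using arg_cong[OF r, of det] by (simp add: det_mul det_mat_conj det_mat_scalar)
  then have dr: "complex_of_real ((cmod (det Q))\<^sup>2) = complex_of_real (r ^ CARD('n))"
    by (metis complex_norm_square of_real_power)
  then have rpow: "r ^ CARD('n) = (cmod (det Q))\<^sup>2" using of_real_eq_iff by metis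
  have rpos: "r ^ CARD('n) > 0" using rpow dQ by simp
  have cpos: "CARD('n) \<noteq> 0" by simp
  have r0: "r \<noteq> 0"
  proof
    assume "r = 0"
    then have "r ^ CARD('n) = 0" using cpos by simp
    then show False using rpos by linarith
  qed
  have Q0: "Q \<noteq> 0"
  proof
    assume "Q = 0"
    then have "det Q = 0" by (metis det_0 mat_0)
    then show False using dQ by simp
  qed
  define M where "M = Q ** mat_adj Q"
  define N where "N = mat (complex_of_real (1/r^2)) ** (transpose Q ** mat_conj Q)"
  have adjT: "mat_adj Q ** transpose Q = mat (complex_of_real r)"
    unfolding mat_adj_def using arg_cong[OF r, of transpose]
    by (simp add: matrix_transpose_mul transpose_mat')
  have cc: "complex_of_real (1/r^2) * (complex_of_real r * complex_of_real r) = 1"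
    using r0 by (simp add: field_simps power2_eq_square)
  have "M ** N = mat (complex_of_real (1/r^2)) ** (Q ** mat_adj Q ** (transpose Q ** mat_conj Q))"
    unfolding M_def N_def by (rule mat_scal_right)
  also have "\<dots> = mat (complex_of_real (1/r^2)) ** (Q ** ((mat_adj Q ** transpose Q) ** mat_conj Q))"
    by (simp only: matrix_mul_assoc)
  also have "\<dots> = mat (complex_of_real (1/r^2)) ** (Q ** (mat (complex_of_real r) ** mat_conj Q))"
    by (simp only: adjT)
  also have "\<dots> = mat (complex_of_real (1/r^2)) ** (mat (complex_of_real r) ** (Q ** mat_conj Q))"
    by (simp only: mat_scal_right[of Q])
  also have "\<dots> = mat 1"
    by (simp only: r mat_mult_mat cc)
  finally have "matrix_inv M = N" by (rule matrix_inv_unique)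
  then have trN: "trace (matrix_inv M) = complex_of_real (1/r^2) * trace M"
    unfolding N_def M_def by (simp add: trace_mat_mult trace_eq)
  have tM: "trace M \<noteq> 0" unfolding M_def using trace_pos[OF Q0] .
  have "trace M = trace (matrix_inv M) \<longleftrightarrow> complex_of_real (1/r^2) * trace M = 1 * trace M"
    unfolding trN by auto
  also have "\<dots> \<longleftrightarrow> complex_of_real (1/r^2) = 1" using tM mult_cancel_right[of "complex_of_real (1/r^2)" "trace M" 1] by blast
  also have "\<dots> \<longleftrightarrow> 1/r^2 = 1" by (rule of_real_eq_1_iff)
  also have "\<dots> \<longleftrightarrow> r^2 = 1" using r0 by (auto simp: field_simps)
  also have "\<dots> \<longleftrightarrow> r = 1 \<or> r = -1" by (simp add: power2_eq_1_iff)
  finally have key: "trace M = trace (matrix_inv M) \<longleftrightarrow> r = 1 \<or> r = -1" .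
  have e1: "Q ** mat_conj Q = mat 1 \<longleftrightarrow> r = 1" unfolding r
    by (metis mat_inj of_real_1 of_real_eq_iff)
  have e2: "Q ** mat_conj Q = mat (-1) \<longleftrightarrow> r = -1" unfolding r
    by (metis mat_inj of_real_minus of_real_1 of_real_eq_iff)
  have odd: "odd CARD('n) \<Longrightarrow> r \<noteq> -1" using rpos by auto
  show ?thesis using key e1 e2 odd unfolding M_def by auto
qed

end
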